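(* Let $I_0\ge1$ be an integer, let $\alpha_1,\dots,\alpha_{I_0-1}$ be non-negative reals, and let $0\le l<u$. For $x\ge0$ let $\beta^{(x)}$ be the family indexed by $\{1,2,\dots\}\cup\{\omega\}$ with $\beta^{(x)}_i=[i<I_0]\alpha_i+[i=I_0]x$. Then $\kappa_i(\beta^{(u)}_i)-\kappa_i(\beta^{(l)}_i)\le u-l$; explicitly, $$\sqrt{\alpha_1^{2^1}+\sqrt{\alpha_2^{2^2}+\dots+\sqrt{\alpha_{I_0-1}^{2^{I_0-1}}+u^{2^{I_0-1}}}}}-\sqrt{\alpha_1^{2^1}+\sqrt{\alpha_2^{2^2}+\dots+\sqrt{\alpha_{I_0-1}^{2^{I_0-1}}+l^{2^{I_0-1}}}}}\le u-l.$$
   Context: $[P]$ is the Iverson bracket ($1$ if $P$ holds, $0$ otherwise). For a family $(\alpha_i)$ of non-negative reals indexed by $\{1,2,\dots\}\cup\{\omega\}$ (with $n<\omega$ for all positive integers $n$), $\kappa_i(\alpha_i)$ is the limit of the approximants $P_0=\alpha_\omega$, $P_n=\sqrt{\alpha_1^{2^1}+\sqrt{\alpha_2^{2^2}+\dots+\sqrt{\alpha_n^{2^n}+\alpha_\omega^{2^n}}}}$ ($n$ nested roots). *)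

theory Defs
  imports Complex_Main
begin

text \<open>A family indexed by positive integers and omega is represented by a function
  a :: nat => real (only indices i >= 1 used) together with the value aw at omega.
  nest a aw m j = sqrt(a_j^(2^j) + sqrt(a_(j+1)^(2^(j+1)) + ... + sqrt(a_(j+m-1)^(2^(j+m-1)) + aw^(2^(j+m-1)))))
  with m nested roots; for m = 0 it is aw^(2^(j-1)).\<close>

fun nest :: "(nat \<Rightarrow> real) \<Rightarrow> real \<Rightarrow> nat \<Rightarrow> nat \<Rightarrow> real" where
  "nest a aw 0 j = aw ^ (2 ^ (j - 1))"
| "nest a aw (Suc m) j = sqrt (a j ^ (2 ^ j) + nest a aw m (Suc j))"

definition approx :: "(nat \<Rightarrow> real) \<Rightarrow> real \<Rightarrow> nat \<Rightarrow> real" where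
  "approx a aw n = nest a aw n 1"

definition kappa :: "(nat \<Rightarrow> real) \<Rightarrow> real \<Rightarrow> real" where
  "kappa a aw = lim (\<lambda>n. approx a aw n)"

end

theory Submission
  imports Defs
begin

fun Fn :: "(nat \<Rightarrow> real) \<Rightarrow> real \<Rightarrow> nat \<Rightarrow> nat \<Rightarrow> real" where
  "Fn a t 0 j = t"
| "Fn a t (Suc m) j = sqrt (a j ^ (2 ^ j) + Fn a t m (Suc j))"

fun Wn :: "(nat \<Rightarrow> real) \<Rightarrow> real \<Rightarrow> nat \<Rightarrow> nat \<Rightarrow> real" where
  "Wn a x 0 j = x"
| "Wn a x (Suc m) j = root (2 ^ j) (a j ^ (2 ^ j) + (Wn a x m (Suc j)) ^ (2 ^ j))"

lemma nest_split: "nest a aw (m + k) j = Fn a (nest a aw k (j + m)) m j"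
  by (induction m arbitrary: j) auto

lemma Fn_split: "Fn a t (m + k) j = Fn a (Fn a t k (j + m)) m j"
  by (induction m arbitrary: j) auto

lemma nest_zero: "j \<ge> 1 \<Longrightarrow> (\<And>i. i \<ge> j \<Longrightarrow> a i = 0) \<Longrightarrow> nest a 0 k j = 0"
  by (induction k arbitrary: j) auto

lemma Wn_nonneg: "x \<ge> 0 \<Longrightarrow> j \<ge> 1 \<Longrightarrow> Wn a x m j \<ge> 0"
proof (induction m arbitrary: j)
  case 0
  then show ?case by simp
next
  case (Suc m)
  have "even ((2::nat) ^ j)" using Suc.prems by simp
  hence "0 \<le> a j ^ (2 ^ j)" by (simp add: zero_le_even_power)
  moreover have "0 \<le> Wn a x m (Suc j)" using Suc by simp
  ultimately show ?case by simp
qed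

lemma Fn_Wn:
  assumes "j \<ge> 1" "x \<ge> 0" "\<And>i. j \<le> i \<Longrightarrow> i < j + m \<Longrightarrow> a i \<ge> 0"
  shows "Fn a (x ^ (2 ^ (j + m - 1))) m j = (Wn a x m j) ^ (2 ^ (j - 1))"
  using assms
proof (induction m arbitrary: j)
  case 0
  then show ?case by simp
next
  case (Suc m)
  have IH: "Fn a (x ^ (2 ^ (Suc j + m - 1))) m (Suc j) = (Wn a x m (Suc j)) ^ (2 ^ j)"
    using Suc.IH[of "Suc j"] Suc.prems by auto
  define R where "R = Wn a x (Suc m) j"
  have aj: "a j \<ge> 0" using Suc.prems by auto
  have W0: "Wn a x m (Suc j) \<ge> 0" using Wn_nonneg Suc.prems by auto
  have s: "0 \<le> a j ^ (2 ^ j) + (Wn a x m (Suc j)) ^ (2 ^ j)" using aj W0 by simp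
  have R0: "R \<ge> 0" unfolding R_def using Wn_nonneg Suc.prems by blast
  have RP: "R ^ (2 ^ j) = a j ^ (2 ^ j) + (Wn a x m (Suc j)) ^ (2 ^ j)"
    unfolding R_def using s by (simp add: real_root_pow_pos2)
  have e: "(2::nat) ^ j = 2 * 2 ^ (j - 1)" using Suc.prems
    by (metis Suc_diff_1 less_le_trans power_Suc zero_less_one)
  have RR: "R ^ (2 ^ j) = (R ^ (2 ^ (j - 1)))^2"
    by (subst e) (metis power_mult mult.commute)
  have "Fn a (x ^ (2 ^ (j + Suc m - 1))) (Suc m) j = sqrt (R ^ (2 ^ j))"
    using IH RP by simp
  also have "\<dots> = sqrt ((R ^ (2 ^ (j - 1)))^2)"
    by (rule arg_cong[where f=sqrt], rule RR)
  also have "\<dots> = R ^ (2 ^ (j - 1))" using R0 by simp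
  finally show ?case unfolding R_def .
qed

lemma pow_incr:
  fixes S b d :: real
  assumes "0 \<le> b" "b \<le> S" "0 \<le> d"
  shows "(b + d) ^ p - b ^ p \<le> (S + d) ^ p - S ^ p \<and> S ^ p \<le> (S + d) ^ p"
proof (induction p)
  case 0
  then show ?case by simp
next
  case (Suc p)
  have h1: "b ^ p \<le> S ^ p" using assms by (simp add: power_mono)
  have h2: "0 \<le> (b + d) ^ p - b ^ p" using assms by (simp add: power_mono)
  have "(b + d) * ((b + d) ^ p - b ^ p) \<le> (S + d) * ((S + d) ^ p - S ^ p)"
    using Suc.IH h2 assms by (intro mult_mono) auto
  moreover have "d * b ^ p \<le> d * S ^ p" using h1 assms by (simp add: mult_left_mono)
  moreover have "S * S ^ p \<le> (S + d) * (S + d) ^ p"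
    using Suc.IH assms by (intro mult_mono) auto
  ultimately show ?case by (simp add: algebra_simps)
qed

lemma root_lip:
  fixes a b b' d :: real and p :: nat
  assumes "p \<ge> 1" "0 \<le> a" "0 \<le> b" "0 \<le> b'" "0 \<le> d" "b' \<le> b + d"
  shows "root p (a ^ p + b' ^ p) \<le> root p (a ^ p + b ^ p) + d"
proof -
  define S where "S = root p (a ^ p + b ^ p)"
  have p0: "p > 0" using assms by simp
  have S0: "S \<ge> 0" unfolding S_def using assms by simp
  have Sp: "S ^ p = a ^ p + b ^ p" unfolding S_def using assms p0
    by (simp add: real_root_pow_pos2)
  have "b ^ p \<le> S ^ p" using Sp assms by simp
  hence bS: "b \<le> S" using S0 p0 assms(3) by (meson power_mono_iff)
  have "a ^ p + b' ^ p \<le> a ^ p + (b + d) ^ p" using assms by (simp add: power_mono)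
  also have "\<dots> \<le> (S + d) ^ p" using pow_incr[OF assms(3) bS assms(5), of p] Sp by simp
  finally have "a ^ p + b' ^ p \<le> (S + d) ^ p" .
  hence "root p (a ^ p + b' ^ p) \<le> root p ((S + d) ^ p)" using p0 by simp
  also have "\<dots> = S + d" using S0 assms p0 by (simp add: real_root_power_cancel)
  finally show ?thesis unfolding S_def .
qed

lemma Wn_lip:
  assumes "0 \<le> l" "l \<le> u" "j \<ge> 1" "\<And>i. j \<le> i \<Longrightarrow> i < j + m \<Longrightarrow> a i \<ge> 0"
  shows "Wn a u m j \<le> Wn a l m j + (u - l)"
  using assms
proof (induction m arbitrary: j)
  case 0
  then show ?case by simp
next
  case (Suc m)
  have IH: "Wn a u m (Suc j) \<le> Wn a l m (Suc j) + (u - l)"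
    using Suc.IH[of "Suc j"] Suc.prems by auto
  have "(1::nat) \<le> 2 ^ j" by simp
  moreover have "a j \<ge> 0" using Suc.prems by auto
  ultimately show ?case using root_lip[of "2^j" "a j" "Wn a l m (Suc j)" "Wn a u m (Suc j)" "u - l"]
      IH Wn_nonneg Suc.prems by auto
qed

lemma kappa_val:
  fixes I0 :: nat and \<alpha> :: "nat \<Rightarrow> real" and x :: real
  assumes "I0 \<ge> 1" "\<And>i. 1 \<le> i \<Longrightarrow> i < I0 \<Longrightarrow> \<alpha> i \<ge> 0" "0 \<le> x"
  shows "kappa (\<lambda>i. of_bool (i < I0) * \<alpha> i + of_bool (i = I0) * x) 0
       = Wn (\<lambda>i. of_bool (i < I0) * \<alpha> i + of_bool (i = I0) * x) x (I0 - 1) 1"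
proof -
  define a where "a = (\<lambda>i. of_bool (i < I0) * \<alpha> i + of_bool (i = I0) * x)"
  define C where "C = Fn a 0 I0 1"
  have ev: "approx a 0 n = C" if "n \<ge> I0" for n
  proof -
    have "approx a 0 n = nest a 0 (I0 + (n - I0)) 1" using that by (simp add: approx_def)
    also have "\<dots> = Fn a (nest a 0 (n - I0) (1 + I0)) I0 1" by (rule nest_split)
    also have "nest a 0 (n - I0) (1 + I0) = 0" by (rule nest_zero) (auto simp: a_def)
    finally show ?thesis unfolding C_def .
  qed
  have "(\<lambda>n. approx a 0 n) \<longlonglongrightarrow> C"
    by (rule tendsto_eventually) (use ev in \<open>auto simp: eventually_sequentially\<close>)
  hence k: "kappa a 0 = C" unfolding kappa_def by (rule limI)
  have "C = Fn a 0 ((I0 - 1) + 1) 1" using assms by (simp add: C_def)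
  also have "\<dots> = Fn a (Fn a 0 1 I0) (I0 - 1) 1" using Fn_split[of a 0 "I0 - 1" 1 1] assms by simp
  also have "Fn a 0 1 I0 = sqrt (x ^ (2 ^ I0))" by (simp add: a_def)
  also have "x ^ (2 ^ I0) = (x ^ (2 ^ (I0 - 1)))^2" using assms
    by (metis One_nat_def Suc_diff_le diff_Suc_1 mult.commute power_Suc power_mult)
  also have "sqrt \<dots> = x ^ (2 ^ (1 + (I0 - 1) - 1))" using assms by simp
  also have "Fn a \<dots> (I0 - 1) 1 = (Wn a x (I0 - 1) 1) ^ (2 ^ (1 - 1))"
    by (rule Fn_Wn) (use assms in \<open>auto simp: a_def\<close>)
  finally show ?thesis using k by (simp add: a_def)
qed

theorem lemma5:
  fixes I0 :: nat and \<alpha> :: "nat \<Rightarrow> real" and l u :: real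
  assumes "I0 \<ge> 1"
    and "\<And>i. 1 \<le> i \<Longrightarrow> i < I0 \<Longrightarrow> \<alpha> i \<ge> 0"
    and "0 \<le> l" and "l < u"
  shows "kappa (\<lambda>i. of_bool (i < I0) * \<alpha> i + of_bool (i = I0) * u) 0
       - kappa (\<lambda>i. of_bool (i < I0) * \<alpha> i + of_bool (i = I0) * l) 0 \<le> u - l"
proof -
  define a where "a = (\<lambda>i. of_bool (i < I0) * \<alpha> i + of_bool (i = I0) * (0::real))"
  have Wu: "Wn (\<lambda>i. of_bool (i < I0) * \<alpha> i + of_bool (i = I0) * x) y m j = Wn a y m j"
    if "j + m \<le> I0" for x y m j
    using that by (induction m arbitrary: j) (auto simp: a_def)
  have "Wn a u (I0 - 1) 1 \<le> Wn a l (I0 - 1) 1 + (u - l)"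
    by (rule Wn_lip) (use assms in \<open>auto simp: a_def\<close>)
  then show ?thesis
    using kappa_val[OF assms(1,2), where x=u] kappa_val[OF assms(1,2), where x=l] assms Wu[where j=1 and m="I0 - 1"]
    by auto
qed

end
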